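(* If $\gamma<\frac14$, then for every $r$ and every $x\in S_r$: (1) $|x-\mu_s|\ge\left(\frac12-2\gamma\right)|\mu_r-\mu_s|$ for all $s\ne r$; (2) $|x-\mu_r|\le\frac{1}{1-4\gamma}|x-\mu_s|$ for all $s\ne r$.
   Context: $\mu_1,\dots,\mu_\beta$ are distinct real numbers (means of $\beta$ distributions) and $\nu_1,\dots,\nu_\beta$ are real numbers (cluster centers). $\Delta_s=|\mu_s-\nu_s|$ and $\gamma=\max_{s,\,r\ne s}\frac{\Delta_s}{|\mu_r-\mu_s|}$. For a finite set of real points, $S_r$ is the set of points $x$ with $|x-\nu_r|\le|x-\nu_s|$ for every $s$. *)

theory Defs
  imports Complex_Main
begin

text \<open>Distributions and clusters are indexed by the set {..<beta} (i.e. 1..beta shifted).\<close>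

definition Delta :: "(nat \<Rightarrow> real) \<Rightarrow> (nat \<Rightarrow> real) \<Rightarrow> nat \<Rightarrow> real" where
  "Delta mu nu s = \<bar>mu s - nu s\<bar>"

definition gamma :: "nat \<Rightarrow> (nat \<Rightarrow> real) \<Rightarrow> (nat \<Rightarrow> real) \<Rightarrow> real" where
  "gamma beta mu nu =
     Max {Delta mu nu s / \<bar>mu r - mu s\<bar> | s r. s < beta \<and> r < beta \<and> r \<noteq> s}"

definition S_cell :: "nat \<Rightarrow> (nat \<Rightarrow> real) \<Rightarrow> real set \<Rightarrow> nat \<Rightarrow> real set" where
  "S_cell beta nu X r = {x \<in> X. \<forall>s<beta. \<bar>x - nu r\<bar> \<le> \<bar>x - nu s\<bar>}"

end

theory Submission
  imports Defs
begin

lemma gamma_ge: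
  assumes "a < beta" "b < beta" "a \<noteq> b"
  shows "Delta mu nu a / \<bar>mu b - mu a\<bar> \<le> gamma beta mu nu"
proof -
  let ?A = "{Delta mu nu s / \<bar>mu r - mu s\<bar> | s r. s < beta \<and> r < beta \<and> r \<noteq> s}"
  have "?A \<subseteq> (\<lambda>(s,r). Delta mu nu s / \<bar>mu r - mu s\<bar>) ` ({..<beta} \<times> {..<beta})" by auto
  hence "finite ?A" by (rule finite_subset) auto
  moreover have "Delta mu nu a / \<bar>mu b - mu a\<bar> \<in> ?A" using assms by blast
  ultimately show ?thesis unfolding gamma_def by (rule Max_ge)
qed

theorem lemma8:
  fixes beta :: nat and mu nu :: "nat \<Rightarrow> real" and X :: "real set" and r :: nat and x :: real
  assumes "inj_on mu {..<beta}"
    and "finite X"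
    and "gamma beta mu nu < 1/4"
    and "r < beta"
    and "x \<in> S_cell beta nu X r"
  shows "(\<forall>s<beta. s \<noteq> r \<longrightarrow> \<bar>x - mu s\<bar> \<ge> (1/2 - 2 * gamma beta mu nu) * \<bar>mu r - mu s\<bar>)
       \<and> (\<forall>s<beta. s \<noteq> r \<longrightarrow> \<bar>x - mu r\<bar> \<le> 1 / (1 - 4 * gamma beta mu nu) * \<bar>x - mu s\<bar>)"
proof -
  define g where "g = gamma beta mu nu"
  have key: "\<bar>x - mu s\<bar> \<ge> (1/2 - 2 * g) * \<bar>mu r - mu s\<bar> \<and> \<bar>x - mu r\<bar> \<le> 1 / (1 - 4 * g) * \<bar>x - mu s\<bar>"
    if s: "s < beta" "s \<noteq> r" for s
  proof -
    let ?D = "\<bar>mu r - mu s\<bar>"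
    have "mu r \<noteq> mu s" using inj_onD[OF assms(1), of r s] assms(4) s by auto
    hence Dp: "?D > 0" by simp
    have g1: "Delta mu nu s / ?D \<le> g" using gamma_ge[of s beta r mu nu] s assms(4) g_def by simp
    have g2: "Delta mu nu r / \<bar>mu s - mu r\<bar> \<le> g" using gamma_ge[of r beta s mu nu] s assms(4) g_def by simp
    have ds: "\<bar>mu s - nu s\<bar> \<le> g * ?D" using g1 Dp by (simp add: Delta_def pos_divide_le_eq)
    have dr: "\<bar>mu r - nu r\<bar> \<le> g * ?D" using g2 Dp by (simp add: Delta_def pos_divide_le_eq abs_minus_commute)
    have g0: "g \<ge> 0" using g1 Dp by (smt (verit) Delta_def abs_ge_zero divide_nonneg_pos)
    have g4: "g < 1/4" using assms(3) g_def by simp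
    have cl: "\<bar>x - nu r\<bar> \<le> \<bar>x - nu s\<bar>" using assms(5) s unfolding S_cell_def by auto
    have t1: "\<bar>x - mu r\<bar> \<le> \<bar>x - mu s\<bar> + 2 * g * ?D" using ds dr cl by linarith
    have t2: "?D \<le> \<bar>x - mu r\<bar> + \<bar>x - mu s\<bar>" by linarith
    have p1: "\<bar>x - mu s\<bar> \<ge> (1/2 - g) * ?D" using t1 t2 by (simp add: algebra_simps)
    have h1: "(1/2 - 2*g) * ?D \<le> (1/2 - g) * ?D" using g0 Dp by (simp add: mult_right_mono)
    have p1': "\<bar>x - mu s\<bar> \<ge> (1/2 - 2*g) * ?D" using p1 h1 by linarith
    have "(1 - 4*g) * \<bar>x - mu r\<bar> \<le> (1 - 4*g) * \<bar>x - mu s\<bar> + 2*g * ((1 - 4*g) * ?D)"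
      using mult_left_mono[OF t1, of "1 - 4*g"] g4 by (simp add: algebra_simps)
    also have "2*g * ((1 - 4*g) * ?D) \<le> 2*g * (2 * \<bar>x - mu s\<bar>)"
      using p1' g0 by (intro mult_left_mono) (auto simp: algebra_simps)
    finally have "(1 - 4*g) * \<bar>x - mu r\<bar> \<le> \<bar>x - mu s\<bar>" by (simp add: algebra_simps)
    hence p2: "\<bar>x - mu r\<bar> \<le> 1 / (1 - 4 * g) * \<bar>x - mu s\<bar>" using g4
      by (simp add: pos_le_divide_eq mult.commute)
    show ?thesis using p1' p2 by simp
  qed
  show ?thesis using key g_def by auto
qed

end
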